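(* Under Total Store Order, for all integers $\mu\ge 1$ and $q\ge 0$, $$\Pr[F_\mu \mid \Phi_\mu \text{ exists and } \Psi_\mu=q]\;\ge\;\frac{2^{-(q-1)}-2^{-\mu q}}{\binom{\mu+q-1}{q}}.$$
   Context: Fix $m\ge 1$. A random program is a sequence $x_1,\dots,x_{m+2}$ of memory operations, each with a type in $\{\mathrm{LD},\mathrm{ST}\}$: $x_1,\dots,x_m$ have i.i.d. types, each $\mathrm{ST}$ with probability $1/2$ and $\mathrm{LD}$ with probability $1/2$; $x_{m+1}$ (the critical load) has type $\mathrm{LD}$ and $x_{m+2}$ (the critical store) has type $\mathrm{ST}$. The initial order is $S_0=(x_1,\dots,x_{m+2})$. A memory model is specified by the set of ordered type pairs $(\tau_1,\tau_2)$ for which an instruction of type $\tau_2$ may be moved ahead of an immediately preceding instruction of type $\tau_1$: Sequential Consistency (SC) allows no pair; Total Store Order (TSO) allows only the pair $(\mathrm{ST},\mathrm{LD})$ (a load may move ahead of a preceding store); Weak Ordering (WO) allows all four pairs. The settling process runs rounds $r=1,\dots,m+2$. Before round $r$, the current order $S_{r-1}$ consists of $x_1,\dots,x_{r-1}$ in some order in positions $1,\dots,r-1$, followed by $x_r,\dots,x_{m+2}$ in positions $r,\dots,m+2$. In round $r$, instruction $x_r$ (starting at position $r$) repeatedly attempts to swap with the instruction immediately preceding it in the current order: the attempt fails automatically if the pair (type of the preceding instruction, type of $x_r$) is not allowed by the memory model, or if $x_r$ is the critical store and the preceding instruction is the critical load; otherwise the attempt succeeds independently with probability $1/2$. The round ends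 when an attempt fails or $x_r$ reaches position $1$; the resulting order is $S_r$. For $\mu\ge1$, $\Phi_\mu$ is the largest index $i\le m$ such that $x_i$ has type $\mathrm{ST}$ and exactly $\mu$ of $x_i,\dots,x_m$ have type $\mathrm{ST}$ (i.e. the initial position of the $\mu$-th non-critical store counting upward from the critical load), if it exists; $\Psi_\mu=m+1-\mu-\Phi_\mu$ is the number of loads among $x_{\Phi_\mu+1},\dots,x_m$. $F_\mu$ is the event that in the order $S_m$ the instructions at positions $m-\mu+1,\dots,m$ all have type $\mathrm{ST}$. *)

theory Defs
  imports "HOL-Probability.Probability"
begin

datatype optype = LD | ST

text \<open>A memory model is the set of allowed ordered type pairs (tau1, tau2): an instruction
  of type tau2 may move ahead of an immediately preceding instruction of type tau1.\<close>
type_synonym memory_model = "optype \<Rightarrow> optype \<Rightarrow> bool"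

definition SC :: memory_model where "SC a b = False"
definition TSO :: memory_model where "TSO a b = (a = ST \<and> b = LD)"
definition WO :: memory_model where "WO a b = True"

text \<open>Type of instruction x_i: x_1..x_m have types ty i, x_(m+1) is the critical load,
  x_(m+2) the critical store.\<close>
definition itype :: "nat \<Rightarrow> (nat \<Rightarrow> optype) \<Rightarrow> nat \<Rightarrow> optype" where
  "itype m ty i = (if i \<le> m then ty i else if i = m + 1 then LD else ST)"

text \<open>Orders are lists of instruction indices; list index k is position k+1.
  bubble: the instruction at list index Suc p attempts to swap with the one at index p;
  the j-th actual (non-automatically-failing) attempt succeeds iff coin j.\<close>
fun bubble :: "memory_model \<Rightarrow> nat \<Rightarrow> (nat \<Rightarrow> optype) \<Rightarrow> (nat \<Rightarrow> bool) \<Rightarrow> nat \<Rightarrow> nat \<Rightarrow> nat list \<Rightarrow> nat list" where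
  "bubble M m ty coin 0 j S = S"
| "bubble M m ty coin (Suc p) j S =
     (let x = S ! Suc p; y = S ! p in
      if M (itype m ty y) (itype m ty x) \<and> \<not> (x = m + 2 \<and> y = m + 1) \<and> coin j
      then bubble M m ty coin p (Suc j) (S[p := x, Suc p := y])
      else S)"

text \<open>S_k: order after rounds 1..k; round r uses the coin sequence c r.\<close>
fun settle :: "memory_model \<Rightarrow> nat \<Rightarrow> (nat \<Rightarrow> optype) \<Rightarrow> (nat \<Rightarrow> nat \<Rightarrow> bool) \<Rightarrow> nat \<Rightarrow> nat list" where
  "settle M m ty c 0 = [1..<m + 3]"
| "settle M m ty c (Suc k) = bubble M m ty (c (Suc k)) k 0 (settle M m ty c k)"

text \<open>Sample space: types of x_1..x_m and the coins (round r in 1..m+2, attempt j < m+2;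
  at most r-1 attempts happen in round r). Uniform distribution = i.i.d. fair choices.\<close>
definition sample_space :: "nat \<Rightarrow> ((nat \<Rightarrow> optype) \<times> (nat \<Rightarrow> nat \<Rightarrow> bool)) set" where
  "sample_space m = {(ty, c). (\<forall>i. i \<notin> {1..m} \<longrightarrow> ty i = LD) \<and>
                          (\<forall>r j. (r \<notin> {1..m+2} \<or> m + 2 \<le> j) \<longrightarrow> \<not> c r j)}"

definition program_pmf :: "nat \<Rightarrow> ((nat \<Rightarrow> optype) \<times> (nat \<Rightarrow> nat \<Rightarrow> bool)) pmf" where
  "program_pmf m = pmf_of_set (sample_space m)"

definition Phi_exists :: "nat \<Rightarrow> (nat \<Rightarrow> optype) \<Rightarrow> nat \<Rightarrow> bool" where
  "Phi_exists m ty \<mu> = (\<exists>i. 1 \<le> i \<and> i \<le> m \<and> ty i = ST \<and> card {j \<in> {i..m}. ty j = ST} = \<mu>)"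

definition Phi :: "nat \<Rightarrow> (nat \<Rightarrow> optype) \<Rightarrow> nat \<Rightarrow> nat" where
  "Phi m ty \<mu> = (GREATEST i. 1 \<le> i \<and> i \<le> m \<and> ty i = ST \<and> card {j \<in> {i..m}. ty j = ST} = \<mu>)"

definition Psi :: "nat \<Rightarrow> (nat \<Rightarrow> optype) \<Rightarrow> nat \<Rightarrow> int" where
  "Psi m ty \<mu> = int m + 1 - int \<mu> - int (Phi m ty \<mu>)"

definition F_event :: "memory_model \<Rightarrow> nat \<Rightarrow> nat \<Rightarrow> ((nat \<Rightarrow> optype) \<times> (nat \<Rightarrow> nat \<Rightarrow> bool)) set" where
  "F_event M m \<mu> = {(ty, c). \<forall>pos \<in> {m + 1 - \<mu>..m}.
       itype m ty (settle M m ty c m ! (pos - 1)) = ST}"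

definition cond_event :: "nat \<Rightarrow> nat \<Rightarrow> nat \<Rightarrow> ((nat \<Rightarrow> optype) \<times> (nat \<Rightarrow> nat \<Rightarrow> bool)) set" where
  "cond_event m \<mu> q = {(ty, c). Phi_exists m ty \<mu> \<and> Psi m ty \<mu> = int q}"

end

theory Submission
  imports Defs
begin


fun cost :: "nat \<Rightarrow> optype list \<Rightarrow> nat" where
  "cost s [] = 0"
| "cost s (LD # w) = s + cost s w"
| "cost s (ST # w) = cost (Suc s) w"

definition Ls :: "nat \<Rightarrow> nat \<Rightarrow> optype list set" where
  "Ls a b = {w. length w = a + b \<and> length (filter (\<lambda>x. x = LD) w) = a}"

definition G :: "nat \<Rightarrow> nat \<Rightarrow> real" where
  "G a b = (\<Sum>w\<in>Ls a b. (1/2) ^ cost 1 w)"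

lemma cost_Suc: "cost (Suc s) w = cost s w + length (filter (\<lambda>x. x = LD) w)"
proof (induction w arbitrary: s)
  case Nil then show ?case by simp
next
  case (Cons x w) then show ?case by (cases x) auto
qed

lemma optype_cases': "x = LD \<or> x = ST" by (cases x) auto

lemma finite_Ls: "finite (Ls a b)"
proof -
  have "Ls a b \<subseteq> {xs. set xs \<subseteq> {LD, ST} \<and> length xs = a + b}"
    unfolding Ls_def using optype_cases' by blast
  moreover have "finite {xs. set xs \<subseteq> {LD, ST} \<and> length xs = a + b}"
    by (rule finite_lists_length_eq) simp
  ultimately show ?thesis by (rule finite_subset)
qed

lemma Cons_Ls: "x # w \<in> Ls a b \<longleftrightarrow>
   (x = LD \<and> 0 < a \<and> w \<in> Ls (a - 1) b) \<or> (x = ST \<and> 0 < b \<and> w \<in> Ls a (b - 1))"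
proof -
  have "length (filter (\<lambda>x. x = LD) w) \<le> length w" by (rule length_filter_le)
  then show ?thesis unfolding Ls_def by (cases x) (auto simp del: length_filter_le)
qed

lemma Ls00: "Ls 0 0 = {[]}" unfolding Ls_def by auto

lemma LsSS: "Ls (Suc a) (Suc b) = (#) LD ` Ls a (Suc b) \<union> (#) ST ` Ls (Suc a) b"
proof (rule set_eqI)
  fix w show "w \<in> Ls (Suc a) (Suc b) \<longleftrightarrow> w \<in> (#) LD ` Ls a (Suc b) \<union> (#) ST ` Ls (Suc a) b"
    by (cases w) (auto simp: Cons_Ls, auto simp: Ls_def)
qed

lemma LsS0: "Ls (Suc a) 0 = (#) LD ` Ls a 0"
proof (rule set_eqI)
  fix w show "w \<in> Ls (Suc a) 0 \<longleftrightarrow> w \<in> (#) LD ` Ls a 0"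
    by (cases w) (auto simp: Cons_Ls, auto simp: Ls_def)
qed

lemma Ls0S: "Ls 0 (Suc b) = (#) ST ` Ls 0 b"
proof (rule set_eqI)
  fix w show "w \<in> Ls 0 (Suc b) \<longleftrightarrow> w \<in> (#) ST ` Ls 0 b"
    by (cases w) (auto simp: Cons_Ls, auto simp: Ls_def)
qed

lemma cost_Ls_Suc: "w \<in> Ls a b \<Longrightarrow> cost (Suc s) w = cost s w + a"
  using cost_Suc unfolding Ls_def by simp

lemma G00: "G 0 0 = 1" by (simp add: G_def Ls00)

lemma G0S: "G 0 (Suc b) = G 0 b"
proof -
  have "G 0 (Suc b) = (\<Sum>w\<in>Ls 0 b. (1/2) ^ cost 1 (ST # w))"
    unfolding G_def Ls0S by (subst sum.reindex) auto
  also have "\<dots> = G 0 b" unfolding G_def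
    by (rule sum.cong) (auto simp: cost_Ls_Suc[where s=1 and a=0, simplified])
  finally show ?thesis .
qed

lemma GS0: "G (Suc a) 0 = 1/2 * G a 0"
proof -
  have "G (Suc a) 0 = (\<Sum>w\<in>Ls a 0. (1/2) ^ cost 1 (LD # w))"
    unfolding G_def LsS0 by (subst sum.reindex) auto
  also have "\<dots> = 1/2 * G a 0" unfolding G_def sum_distrib_left
    by (rule sum.cong) auto
  finally show ?thesis .
qed

lemma GSS: "G (Suc a) (Suc b) = 1/2 * G a (Suc b) + (1/2)^(Suc a) * G (Suc a) b"
proof -
  have d: "(#) LD ` Ls a (Suc b) \<inter> (#) ST ` Ls (Suc a) b = {}" by auto
  have "G (Suc a) (Suc b) = (\<Sum>w\<in>(#) LD ` Ls a (Suc b). (1/2) ^ cost 1 w)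
       + (\<Sum>w\<in>(#) ST ` Ls (Suc a) b. (1/2) ^ cost 1 w)"
    unfolding G_def LsSS by (rule sum.union_disjoint) (auto simp: finite_Ls)
  also have "(\<Sum>w\<in>(#) LD ` Ls a (Suc b). (1/2::real) ^ cost 1 w)
     = (\<Sum>w\<in>Ls a (Suc b). (1/2) ^ cost 1 (LD # w))" by (subst sum.reindex) auto
  also have "\<dots> = 1/2 * G a (Suc b)" unfolding G_def sum_distrib_left
    by (rule sum.cong) auto
  also have "(\<Sum>w\<in>(#) ST ` Ls (Suc a) b. (1/2::real) ^ cost 1 w)
     = (\<Sum>w\<in>Ls (Suc a) b. (1/2) ^ cost 1 (ST # w))" by (subst sum.reindex) auto
  also have "\<dots> = (1/2)^(Suc a) * G (Suc a) b" unfolding G_def sum_distrib_left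
    by (rule sum.cong) (auto simp: cost_Ls_Suc[where s=1, simplified] power_add)
  finally show ?thesis .
qed

lemma card_Ls: "card (Ls a b) = (a + b) choose a"
proof (induction a arbitrary: b)
  case 0
  then show ?case
  proof (induction b)
    case 0 then show ?case by (simp add: Ls00)
  next
    case (Suc b) then show ?case by (simp add: Ls0S card_image)
  qed
next
  case (Suc a)
  then show ?case
  proof (induction b)
    case 0 then show ?case by (simp add: LsS0 card_image)
  next
    case (Suc b)
    have "card (Ls (Suc a) (Suc b)) = card ((#) LD ` Ls a (Suc b)) + card ((#) ST ` Ls (Suc a) b)"
      unfolding LsSS by (rule card_Un_disjoint) (auto simp: finite_Ls)
    also have "\<dots> = card (Ls a (Suc b)) + card (Ls (Suc a) b)" by (simp add: card_image)
    also have "\<dots> = ((a + Suc b) choose a) + ((Suc a + b) choose (Suc a))"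
      using Suc by simp
    finally show ?case by simp
  qed
qed

lemma half_pow: "(1/2::real) ^ n = 2 powr (- real n)"
  by (simp add: powr_minus powr_realpow power_one_over inverse_eq_divide)

lemma G0: "G 0 b = 1"
  by (induction b) (simp_all add: G00 G0S)

lemma G_bound: "G a b \<ge> 2 powr (1 - real a) - 2 powr (- real ((b+1)*a))"
proof (induction a arbitrary: b)
  case 0 then show ?case by (simp add: G0)
next
  case (Suc a)
  note IHa = Suc
  show ?case
  proof (induction b)
    case 0
    have "G a 0 \<ge> 2 powr (1 - real a) - 2 powr (- real a)" using IHa[of 0] by simp
    also have "2 powr (1 - real a) - 2 powr (- real a) = 2 powr (- real a)"
      by (simp add: powr_diff powr_minus field_simps)
    finally have "G a 0 \<ge> 2 powr (- real a)" .
    then have "G (Suc a) 0 \<ge> 1/2 * 2 powr (- real a)" by (simp add: GS0)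
    moreover have "1/2 * 2 powr (- real a) = 2 powr (1 - real (Suc a)) - 2 powr (- real (Suc a))"
      by (simp add: powr_diff powr_minus field_simps powr_add)
    ultimately show ?case by simp
  next
    case (Suc b)
    have h1: "G a (Suc b) \<ge> 2 powr (1 - real a) - 2 powr (- real ((b+2)*a))"
      using IHa[of "Suc b"] by (simp add: add.commute)
    have h2: "G (Suc a) b \<ge> 2 powr (- real a) - 2 powr (- real ((b+1)*(a+1)))"
      using Suc by (simp add: add.commute)
    have "G (Suc a) (Suc b) = 1/2 * G a (Suc b) + 2 powr (- real (Suc a)) * G (Suc a) b"
      by (simp only: GSS half_pow)
    also have "\<dots> \<ge> 1/2 * (2 powr (1 - real a) - 2 powr (- real ((b+2)*a)))
        + 2 powr (- real (Suc a)) * (2 powr (- real a) - 2 powr (- real ((b+1)*(a+1))))"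
      using h1 h2 by (intro add_mono mult_left_mono) auto
    finally have h3: "G (Suc a) (Suc b) \<ge> 1/2 * (2 powr (1 - real a) - 2 powr (- real ((b+2)*a)))
        + 2 powr (- real (Suc a)) * (2 powr (- real a) - 2 powr (- real ((b+1)*(a+1))))" .
    have e1: "1/2 * 2 powr (1 - real a) = 2 powr (- real a)"
      by (simp add: powr_diff powr_minus field_simps)
    have e2: "1/2 * 2 powr (- real ((b+2)*a)) = 2 powr (- real ((b+2)*a) - 1)"
      by (subst powr_diff) simp
    have e3: "2 powr (- real (Suc a)) * 2 powr (- real a) = 2 powr (- 2 * real a - 1)"
    proof -
      have "2 powr (- real (Suc a)) * 2 powr (- real a) = (2::real) powr (- real (Suc a) + - real a)"
        by (rule powr_add[symmetric])
      also have "- real (Suc a) + - real a = - 2 * real a - 1" by simp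
      finally show ?thesis .
    qed
    have e4: "2 powr (- real (Suc a)) * 2 powr (- real ((b+1)*(a+1))) = 2 powr (- real ((Suc b + 1) * Suc a))"
    proof -
      have "2 powr (- real (Suc a)) * 2 powr (- real ((b+1)*(a+1))) = (2::real) powr (- real (Suc a) + - real ((b+1)*(a+1)))"
        by (rule powr_add[symmetric])
      also have "- real (Suc a) + - real ((b+1)*(a+1)) = - real ((Suc b + 1) * Suc a)" by (simp add: algebra_simps)
      finally show ?thesis .
    qed
    have e5: "2 powr (- real ((b+2)*a) - 1) \<le> 2 powr (- 2 * real a - 1)"
    proof -
      have "real (2 * a) \<le> real ((b+2)*a)" by simp
      then show ?thesis by (intro powr_mono) auto
    qed
    have e6: "2 powr (1 - real (Suc a)) = 2 powr (- real a)" by simp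
    show ?case using h3 e5 unfolding right_diff_distrib e1 e2 e3 e4 e6 by linarith
  qed
qed



definition mv :: "nat \<Rightarrow> nat \<Rightarrow> nat list \<Rightarrow> nat list" where
  "mv P n S = map (\<lambda>i. if i = P - n then S ! P else if P - n < i \<and> i \<le> P then S ! (i - 1) else S ! i) [0..<length S]"

lemma bubble_length: "length (bubble M m ty coin P j S) = length S"
  by (induction P arbitrary: j S) (auto simp: Let_def)

lemma bubble_frame: "P < i \<Longrightarrow> bubble M m ty coin P j S ! i = S ! i"
  by (induction P arbitrary: j S) (auto simp: Let_def)

lemma mv0: "mv P 0 S = S"
  by (rule nth_equalityI) (auto simp: mv_def)

lemma bubble_pass:
  assumes "n \<le> P" "P < length S"
    and "\<forall>i<n. M (itype m ty (S ! (P - Suc i))) (itype m ty (S ! P))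
                \<and> \<not> (S ! P = m + 2 \<and> S ! (P - Suc i) = m + 1) \<and> coin (j + i)"
  shows "bubble M m ty coin P j S = bubble M m ty coin (P - n) (j + n) (mv P n S)"
  using assms
proof (induction n arbitrary: P j S)
  case 0 then show ?case by (simp add: mv0)
next
  case (Suc n)
  then obtain P0 where P0: "P = Suc P0" by (cases P) auto
  define S1 where "S1 = S[P0 := S ! P, P := S ! P0]"
  have c0: "M (itype m ty (S ! P0)) (itype m ty (S ! P)) \<and> \<not> (S ! P = m + 2 \<and> S ! P0 = m + 1) \<and> coin j"
    using Suc.prems(3)[rule_format, of 0] P0 by simp
  have step: "bubble M m ty coin P j S = bubble M m ty coin P0 (Suc j) S1"
    using c0 unfolding P0 S1_def by (simp add: Let_def P0)
  have len: "length S1 = length S" by (simp add: S1_def)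
  have S1P0: "S1 ! P0 = S ! P" using Suc.prems P0 by (simp add: S1_def nth_list_update)
  have S1lt: "\<And>i. i < P0 \<Longrightarrow> S1 ! i = S ! i" using Suc.prems P0 by (simp add: S1_def nth_list_update)
  have IH: "bubble M m ty coin P0 (Suc j) S1 = bubble M m ty coin (P0 - n) (Suc j + n) (mv P0 n S1)"
  proof (rule Suc.IH)
    show "n \<le> P0" using Suc.prems P0 by simp
    show "P0 < length S1" using Suc.prems P0 len by simp
    show "\<forall>i<n. M (itype m ty (S1 ! (P0 - Suc i))) (itype m ty (S1 ! P0)) \<and>
          \<not> (S1 ! P0 = m + 2 \<and> S1 ! (P0 - Suc i) = m + 1) \<and> coin (Suc j + i)"
    proof (intro allI impI)
      fix i assume i: "i < n"
      have "S1 ! (P0 - Suc i) = S ! (P - Suc (Suc i))" using S1lt[of "P0 - Suc i"] i Suc.prems P0 by simp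
      then show "M (itype m ty (S1 ! (P0 - Suc i))) (itype m ty (S1 ! P0)) \<and>
          \<not> (S1 ! P0 = m + 2 \<and> S1 ! (P0 - Suc i) = m + 1) \<and> coin (Suc j + i)"
        using Suc.prems(3)[rule_format, of "Suc i"] i S1P0 by simp
    qed
  qed
  have mveq: "mv P0 n S1 = mv P (Suc n) S"
  proof (rule nth_equalityI)
    show "length (mv P0 n S1) = length (mv P (Suc n) S)" by (simp add: mv_def len)
    fix i assume "i < length (mv P0 n S1)"
    then have i: "i < length S" by (simp add: mv_def len)
    show "mv P0 n S1 ! i = mv P (Suc n) S ! i"
      using i Suc.prems P0 len by (auto simp: mv_def S1_def nth_list_update)
  qed
  show ?case using step IH mveq P0 by simp
qed

lemma mv_length: "length (mv P n S) = length S" by (simp add: mv_def)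

lemma mv_nth: "i < length S \<Longrightarrow> P - n < i \<Longrightarrow> i \<le> P \<Longrightarrow> mv P n S ! i = S ! (i - 1)"
  by (simp add: mv_def)



lemma settle_frame: "k \<le> m + 2 \<Longrightarrow> length (settle M m ty c k) = m + 2 \<and>
   (\<forall>i. k \<le> i \<longrightarrow> i < m + 2 \<longrightarrow> settle M m ty c k ! i = Suc i)"
proof (induction k)
  case 0 then show ?case by simp
next
  case (Suc k)
  then show ?case by (simp add: bubble_length bubble_frame)
qed

definition Kc :: "nat \<Rightarrow> (nat \<Rightarrow> optype) \<Rightarrow> nat \<Rightarrow> nat" where
  "Kc p ty r = card {s \<in> {p..<r}. ty s = ST}"

lemma Kc_le: "Kc p ty r \<le> r - p"
proof -
  have "Kc p ty r \<le> card {p..<r}" unfolding Kc_def by (rule card_mono) auto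
  then show ?thesis by simp
qed

lemma Kc_Suc: "p \<le> r \<Longrightarrow> Kc p ty (Suc r) = Kc p ty r + (if ty r = ST then 1 else 0)"
proof -
  assume "p \<le> r"
  then have "{s \<in> {p..<Suc r}. ty s = ST} = (if ty r = ST then insert r {s \<in> {p..<r}. ty s = ST} else {s \<in> {p..<r}. ty s = ST})"
    by (auto simp: less_Suc_eq)
  then show ?thesis unfolding Kc_def by simp
qed

lemma Kc_small: "r \<le> p \<Longrightarrow> Kc p ty r = 0"
  unfolding Kc_def by simp

lemma settle_inv:
  assumes p: "1 \<le> p"
    and E: "\<forall>r j. p < r \<and> r \<le> m \<and> ty r = LD \<and> j < Kc p ty r \<longrightarrow> c r j"
  shows "k \<le> m \<Longrightarrow> \<forall>i. k - Kc p ty (Suc k) \<le> i \<and> i < k \<longrightarrow> itype m ty (settle TSO m ty c k ! i) = ST"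
proof (induction k)
  case 0 then show ?case by simp
next
  case (Suc k)
  show ?case
  proof (cases "Suc (Suc k) \<le> p")
    case True then show ?thesis by (auto simp add: Kc_small)
  next
    case False
    then have pk: "p \<le> Suc k" by simp
    define S where "S = settle TSO m ty c k"
    have fr: "length S = m + 2" "\<And>i. k \<le> i \<Longrightarrow> i < m + 2 \<Longrightarrow> S ! i = Suc i"
      using settle_frame[of k m TSO ty c] Suc.prems unfolding S_def by auto
    have IH: "\<And>i. k - Kc p ty (Suc k) \<le> i \<Longrightarrow> i < k \<Longrightarrow> itype m ty (S ! i) = ST"
      using Suc S_def by auto
    have Sk: "S ! k = Suc k" using fr Suc.prems by simp
    have settleS: "settle TSO m ty c (Suc k) = bubble TSO m ty (c (Suc k)) k 0 S"
      by (simp add: S_def)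
    show ?thesis
    proof (cases "ty (Suc k)")
      case ST
      have KS: "Kc p ty (Suc (Suc k)) = Kc p ty (Suc k) + 1" using Kc_Suc[OF pk] ST by simp
      have tyk: "itype m ty (S ! k) = ST" using Sk ST Suc.prems by (simp add: itype_def)
      have b: "bubble TSO m ty (c (Suc k)) k 0 S = S"
      proof (cases k)
        case 0 then show ?thesis by simp
      next
        case (Suc k0) then show ?thesis using tyk by (simp add: Let_def TSO_def)
      qed
      show ?thesis
      proof (intro allI impI)
        fix i assume i: "Suc k - Kc p ty (Suc (Suc k)) \<le> i \<and> i < Suc k"
        show "itype m ty (settle TSO m ty c (Suc k) ! i) = ST"
        proof (cases "i = k")
          case True then show ?thesis using settleS b tyk by simp
        next
          case False then show ?thesis using settleS b IH[of i] i KS by simp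
        qed
      qed
    next
      case LD
      define n where "n = Kc p ty (Suc k)"
      have KS: "Kc p ty (Suc (Suc k)) = n" using Kc_Suc[OF pk] LD n_def by simp
      have nk: "n \<le> k" using Kc_le[of p ty "Suc k"] p n_def by simp
      have tyk: "itype m ty (S ! k) = LD" using Sk LD Suc.prems by (simp add: itype_def)
      have pass: "bubble TSO m ty (c (Suc k)) k 0 S = bubble TSO m ty (c (Suc k)) (k - n) (0 + n) (mv k n S)"
      proof (rule bubble_pass)
        show "n \<le> k" by fact
        show "k < length S" using fr Suc.prems by simp
        show "\<forall>i<n. TSO (itype m ty (S ! (k - Suc i))) (itype m ty (S ! k)) \<and>
          \<not> (S ! k = m + 2 \<and> S ! (k - Suc i) = m + 1) \<and> c (Suc k) (0 + i)"
        proof (intro allI impI conjI)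
          fix i assume i: "i < n"
          show "TSO (itype m ty (S ! (k - Suc i))) (itype m ty (S ! k))"
            using IH[of "k - Suc i"] i nk tyk n_def by (simp add: TSO_def)
          show "\<not> (S ! k = m + 2 \<and> S ! (k - Suc i) = m + 1)" using Sk Suc.prems by simp
          have pk': "p < Suc k" using i n_def Kc_small[of "Suc k" p ty] pk by (cases "p = Suc k") auto
          show "c (Suc k) (0 + i)" using E pk' Suc.prems LD i n_def by auto
        qed
      qed
      show ?thesis
      proof (intro allI impI)
        fix i assume i: "Suc k - Kc p ty (Suc (Suc k)) \<le> i \<and> i < Suc k"
        have kn: "k - n < i" using i KS nk by linarith
        have "settle TSO m ty c (Suc k) ! i = mv k n S ! i"
          using settleS pass bubble_frame[OF kn] by simp
        also have "\<dots> = S ! (i - 1)" using i KS nk fr Suc.prems by (intro mv_nth) auto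
        finally have eqS: "settle TSO m ty c (Suc k) ! i = S ! (i - 1)" .
        show "itype m ty (settle TSO m ty c (Suc k) ! i) = ST"
        proof -
          have "k - Kc p ty (Suc k) \<le> i - 1" "i - 1 < k" using i kn n_def by linarith+
          then show ?thesis using IH[of "i - 1"] eqS by simp
        qed
      qed
    qed
  qed
qed



definition TyS :: "nat \<Rightarrow> (nat \<Rightarrow> optype) set" where
  "TyS m = {ty. \<forall>i. i \<notin> {1..m} \<longrightarrow> ty i = LD}"
definition CnS :: "nat \<Rightarrow> (nat \<Rightarrow> nat \<Rightarrow> bool) set" where
  "CnS m = {c. \<forall>r j. (r \<notin> {1..m+2} \<or> m + 2 \<le> j) \<longrightarrow> \<not> c r j}"
definition BS :: "nat \<Rightarrow> (nat \<times> nat) set" where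
  "BS m = {1..m+2} \<times> {..<m+2}"

lemma sample_space_eq: "sample_space m = TyS m \<times> CnS m"
  unfolding sample_space_def TyS_def CnS_def by auto

lemma finite_TyS: "finite (TyS m)"
proof -
  have "inj_on (\<lambda>ty. {i. ty i = ST}) (TyS m)"
  proof (rule inj_onI)
    fix x y assume x: "x \<in> TyS m" and y: "y \<in> TyS m" and e: "{i. x i = ST} = {i. y i = ST}"
    show "x = y"
    proof
      fix i show "x i = y i" using e optype_cases'[of "x i"] optype_cases'[of "y i"]
        by (metis (mono_tags, lifting) mem_Collect_eq optype.distinct(1))
    qed
  qed
  moreover have "(\<lambda>ty. {i. ty i = ST}) ` TyS m \<subseteq> Pow {1..m}" unfolding TyS_def by auto
  ultimately show ?thesis by (meson finite_Pow_iff finite_atLeastAtMost finite_subset inj_on_finite)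
qed

lemma card_CnS_D:
  assumes D: "D \<subseteq> BS m"
  shows "card {c \<in> CnS m. \<forall>(r, j)\<in>D. c r j} = 2 ^ (card (BS m) - card D)"
    and "finite {c \<in> CnS m. \<forall>(r, j)\<in>D. c r j}"
proof -
  have fB: "finite (BS m)" unfolding BS_def by simp
  have bij: "bij_betw (\<lambda>c. {(r, j). c r j} - D) {c \<in> CnS m. \<forall>(r, j)\<in>D. c r j} (Pow (BS m - D))"
  proof (rule bij_betw_byWitness[where f' = "\<lambda>X r j. (r, j) \<in> X \<union> D"])
    show "\<forall>c\<in>{c \<in> CnS m. \<forall>(r, j)\<in>D. c r j}. (\<lambda>r j. (r, j) \<in> ({(r, j). c r j} - D) \<union> D) = c"
      by (auto intro!: ext)
    show "\<forall>X\<in>Pow (BS m - D). {(r, j). (r, j) \<in> X \<union> D} - D = X" by auto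
    show "(\<lambda>c. {(r, j). c r j} - D) ` {c \<in> CnS m. \<forall>(r, j)\<in>D. c r j} \<subseteq> Pow (BS m - D)"
      unfolding CnS_def BS_def by (auto simp: not_le) (metis gr0I le_simps(3), metis not_less, metis not_less)
    show "(\<lambda>X r j. (r, j) \<in> X \<union> D) ` Pow (BS m - D) \<subseteq> {c \<in> CnS m. \<forall>(r, j)\<in>D. c r j}"
      using D unfolding CnS_def BS_def by auto
  qed
  have fD: "finite D" using D fB finite_subset by blast
  show "card {c \<in> CnS m. \<forall>(r, j)\<in>D. c r j} = 2 ^ (card (BS m) - card D)"
    using bij_betw_same_card[OF bij] fB fD D by (simp add: card_Pow card_Diff_subset)
  show "finite {c \<in> CnS m. \<forall>(r, j)\<in>D. c r j}"
    using bij_betw_finite[OF bij] fB by simp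
qed

lemma card_CnS: "card (CnS m) = 2 ^ card (BS m)" "finite (CnS m)"
  using card_CnS_D[of "{}" m] by auto

definition TS :: "nat \<Rightarrow> nat \<Rightarrow> nat \<Rightarrow> (nat \<Rightarrow> optype) set" where
  "TS m \<mu> p = {ty \<in> TyS m. ty p = ST \<and> card {j \<in> {p<..m}. ty j = ST} = \<mu> - 1}"

lemma cond_char:
  assumes mu: "1 \<le> \<mu>" and mq: "\<mu> + q \<le> m" and pdef: "p = m + 1 - \<mu> - q"
  shows "(Phi_exists m ty \<mu> \<and> Psi m ty \<mu> = int q) \<longleftrightarrow>
         (ty p = ST \<and> card {j \<in> {p<..m}. ty j = ST} = \<mu> - 1)"
proof -
  define Pr where "Pr i = (1 \<le> i \<and> i \<le> m \<and> ty i = ST \<and> card {j \<in> {i..m}. ty j = ST} = \<mu>)" for i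
  have spl: "\<And>i. ty i = ST \<Longrightarrow> i \<le> m \<Longrightarrow> {j \<in> {i..m}. ty j = ST} = insert i {j \<in> {i<..m}. ty j = ST}"
    by auto
  have cspl: "\<And>i. ty i = ST \<Longrightarrow> i \<le> m \<Longrightarrow> card {j \<in> {i..m}. ty j = ST} = Suc (card {j \<in> {i<..m}. ty j = ST})"
    by (subst spl) auto
  have PhiG: "Phi m ty \<mu> = (GREATEST i. Pr i)" unfolding Phi_def Pr_def by simp
  show ?thesis
  proof
    assume h: "Phi_exists m ty \<mu> \<and> Psi m ty \<mu> = int q"
    then obtain i where "Pr i" unfolding Phi_exists_def Pr_def by blast
    then have PP: "Pr (Phi m ty \<mu>)" unfolding PhiG
      by (rule GreatestI_nat[where b = m]) (auto simp: Pr_def)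
    have "int m + 1 - int \<mu> - int (Phi m ty \<mu>) = int q" using h unfolding Psi_def by simp
    then have "Phi m ty \<mu> = p" using pdef mq by linarith
    then show "ty p = ST \<and> card {j \<in> {p<..m}. ty j = ST} = \<mu> - 1"
      using PP cspl[of p] unfolding Pr_def by auto
  next
    assume h: "ty p = ST \<and> card {j \<in> {p<..m}. ty j = ST} = \<mu> - 1"
    have pm: "1 \<le> p" "p \<le> m" using pdef mq mu by auto
    have Pp: "Pr p" unfolding Pr_def using h pm cspl[of p] mu by auto
    have "(GREATEST i. Pr i) = p"
    proof (rule Greatest_equality)
      show "Pr p" by fact
      fix y assume y: "Pr y"
      show "y \<le> p"
      proof (rule ccontr)
        assume "\<not> y \<le> p"
        then have "{j \<in> {y..m}. ty j = ST} \<subseteq> {j \<in> {p<..m}. ty j = ST}" by auto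
        then have "card {j \<in> {y..m}. ty j = ST} \<le> card {j \<in> {p<..m}. ty j = ST}"
          by (intro card_mono) auto
        then show False using y h mu unfolding Pr_def by simp
      qed
    qed
    then have "Phi m ty \<mu> = p" using PhiG by simp
    then show "Phi_exists m ty \<mu> \<and> Psi m ty \<mu> = int q"
      using Pp pdef mq unfolding Phi_exists_def Psi_def Pr_def by auto
  qed
qed

lemma cond_bound:
  assumes "(ty, c) \<in> cond_event m \<mu> q"
  shows "\<mu> + q \<le> m"
proof -
  define Pr where "Pr i = (1 \<le> i \<and> i \<le> m \<and> ty i = ST \<and> card {j \<in> {i..m}. ty j = ST} = \<mu>)" for i
  have h: "Phi_exists m ty \<mu>" "Psi m ty \<mu> = int q" using assms unfolding cond_event_def by auto
  then obtain i where "Pr i" unfolding Phi_exists_def Pr_def by blast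
  then have PP: "Pr (Phi m ty \<mu>)" unfolding Phi_def Pr_def
    by (rule GreatestI_nat[where b = m, unfolded Pr_def]) (auto simp: Pr_def)
  then show ?thesis using h(2) unfolding Psi_def Pr_def by linarith
qed

lemma cond_eq:
  assumes mu: "1 \<le> \<mu>" and mq: "\<mu> + q \<le> m"
  shows "sample_space m \<inter> cond_event m \<mu> q = TS m \<mu> (m + 1 - \<mu> - q) \<times> CnS m"
  using cond_char[OF mu mq refl] unfolding sample_space_eq cond_event_def TS_def by auto



lemma cost_snoc: "cost s (w @ [x]) = cost s w + (if x = LD then s + length (filter (\<lambda>y. y = ST) w) else 0)"
proof (induction w arbitrary: s)
  case Nil then show ?case by (cases x) auto
next
  case (Cons y w) then show ?case by (cases y) auto
qed

lemma len_filter_map_upt: "length (filter P (map ty [a..<b])) = card {i \<in> {a..<b}. P (ty i)}"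
proof (induction b)
  case 0 then show ?case by simp
next
  case (Suc b)
  show ?case
  proof (cases "a \<le> b")
    case True
    have "{i \<in> {a..<Suc b}. P (ty i)} = (if P (ty b) then insert b {i \<in> {a..<b}. P (ty i)} else {i \<in> {a..<b}. P (ty i)})"
      using True by (auto simp: less_Suc_eq)
    then show ?thesis using Suc True by simp
  next
    case False
    then have "{i \<in> {a..<Suc b}. P (ty i)} = {}" by auto
    then show ?thesis using False by simp
  qed
qed

lemma cost_map_upt: "a \<le> b \<Longrightarrow> cost s (map ty [a..<b]) =
   (\<Sum>r\<in>{r \<in> {a..<b}. ty r = LD}. s + card {t \<in> {a..<r}. ty t = ST})"
proof (induction b rule: dec_induct)
  case base then show ?case by simp
next
  case (step b)
  have "{r \<in> {a..<Suc b}. ty r = LD} = (if ty b = LD then insert b {r \<in> {a..<b}. ty r = LD} else {r \<in> {a..<b}. ty r = LD})"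
    using step by (auto simp: less_Suc_eq)
  moreover have "length (filter (\<lambda>y. y = ST) (map ty [a..<b])) = card {t \<in> {a..<b}. ty t = ST}"
    by (rule len_filter_map_upt)
  moreover have "map ty [a..<Suc b] = map ty [a..<b] @ [ty b]" using step by simp
  ultimately show ?case using step by (simp only: cost_snoc) simp
qed

definition Dset :: "nat \<Rightarrow> nat \<Rightarrow> (nat \<Rightarrow> optype) \<Rightarrow> (nat \<times> nat) set" where
  "Dset m p ty = {(r, j). p < r \<and> r \<le> m \<and> ty r = LD \<and> j < Kc p ty r}"

lemma Dset_sub: "Dset m p ty \<subseteq> BS m"
proof
  fix x assume "x \<in> Dset m p ty"
  then obtain r j where x: "x = (r, j)" "p < r" "r \<le> m" "j < Kc p ty r" unfolding Dset_def by auto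
  then show "x \<in> BS m" using Kc_le[of p ty r] unfolding BS_def by auto
qed

lemma card_Dset:
  assumes "ty p = ST" "p \<le> m"
  shows "card (Dset m p ty) = cost 1 (map ty [Suc p..<Suc m])"
proof -
  define R where "R = {r \<in> {Suc p..<Suc m}. ty r = LD}"
  have "Dset m p ty = Sigma R (\<lambda>r. {..<Kc p ty r})" unfolding Dset_def R_def by auto
  then have "card (Dset m p ty) = (\<Sum>r\<in>R. Kc p ty r)" by (simp add: R_def)
  also have "\<dots> = (\<Sum>r\<in>R. 1 + card {t \<in> {Suc p..<r}. ty t = ST})"
  proof (rule sum.cong)
    fix r assume "r \<in> R"
    then have r: "p < r" unfolding R_def by auto
    have "{s \<in> {p..<r}. ty s = ST} = insert p {t \<in> {Suc p..<r}. ty t = ST}" using r assms by auto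
    then show "Kc p ty r = 1 + card {t \<in> {Suc p..<r}. ty t = ST}" unfolding Kc_def by simp
  qed simp
  also have "\<dots> = cost 1 (map ty [Suc p..<Suc m])" unfolding R_def
    using cost_map_upt[of "Suc p" "Suc m" 1 ty] assms by simp
  finally show ?thesis .
qed



declare upt_Suc[simp del]

lemma filter_ST_LD: "length (filter (\<lambda>x. x = ST) w) = length w - length (filter (\<lambda>x. x = LD) w)"
proof (induction w)
  case Nil then show ?case by simp
next
  case (Cons x w)
  have "length (filter (\<lambda>x. x = LD) w) \<le> length w" by (rule length_filter_le)
  then show ?case using Cons by (cases x) (auto simp del: length_filter_le)
qed

lemma card_ST_map: "card {j \<in> {p<..m}. ty j = ST} = length (filter (\<lambda>x. x = ST) (map ty [Suc p..<Suc m]))"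
proof -
  have "{j \<in> {p<..m}. ty j = ST} = {j \<in> {Suc p..<Suc m}. ty j = ST}" by auto
  then show ?thesis using len_filter_map_upt[of "\<lambda>x. x = ST" ty "Suc p" "Suc m"] by simp
qed

definition AS :: "nat \<Rightarrow> nat \<Rightarrow> (nat \<Rightarrow> optype) set" where
  "AS m p = {a \<in> TyS m. a p = ST \<and> (\<forall>i>p. a i = LD)}"

definition psi :: "nat \<Rightarrow> nat \<Rightarrow> (nat \<Rightarrow> optype) \<times> optype list \<Rightarrow> nat \<Rightarrow> optype" where
  "psi m p = (\<lambda>(a, w) i. if p < i \<and> i \<le> m then w ! (i - Suc p) else a i)"

lemma map_psi:
  assumes "length w = m - p" "p \<le> m"
  shows "map (psi m p (a, w)) [Suc p..<Suc m] = w"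
proof (rule nth_equalityI)
  show "length (map (psi m p (a, w)) [Suc p..<Suc m]) = length w" using assms by simp
  fix k assume "k < length (map (psi m p (a, w)) [Suc p..<Suc m])"
  then have k: "k < m - p" by simp
  then show "map (psi m p (a, w)) [Suc p..<Suc m] ! k = w ! k"
  proof -
    have "Suc (p + k) \<le> m" using k by arith
    then show ?thesis using k by (simp add: psi_def)
  qed
qed

lemma psi_bij:
  assumes mu: "1 \<le> \<mu>" and mq: "\<mu> + q \<le> m" and pdef: "p = m + 1 - \<mu> - q"
  shows "bij_betw (psi m p) (AS m p \<times> Ls q (\<mu> - 1)) (TS m \<mu> p)"
proof (rule bij_betw_byWitness[where f' = "\<lambda>ty. (\<lambda>i. if p < i then LD else ty i, map ty [Suc p..<Suc m])"])
  have pm: "1 \<le> p" "p \<le> m" "m - p = q + (\<mu> - 1)" using mu mq pdef by auto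
  show "\<forall>x\<in>AS m p \<times> Ls q (\<mu> - 1). (\<lambda>i. if p < i then LD else psi m p x i, map (psi m p x) [Suc p..<Suc m]) = x"
  proof
    fix x assume x: "x \<in> AS m p \<times> Ls q (\<mu> - 1)"
    then obtain a w where aw: "x = (a, w)" "a \<in> AS m p" "w \<in> Ls q (\<mu> - 1)" by auto
    have lw: "length w = m - p" using aw pm unfolding Ls_def by simp
    have "(\<lambda>i. if p < i then LD else psi m p x i) = a"
      using aw unfolding AS_def psi_def by (auto intro!: ext)
    then show "(\<lambda>i. if p < i then LD else psi m p x i, map (psi m p x) [Suc p..<Suc m]) = x"
      using map_psi[OF lw pm(2)] aw by simp
  qed
  show "\<forall>ty\<in>TS m \<mu> p. psi m p (\<lambda>i. if p < i then LD else ty i, map ty [Suc p..<Suc m]) = ty"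
  proof
    fix ty assume ty: "ty \<in> TS m \<mu> p"
    show "psi m p (\<lambda>i. if p < i then LD else ty i, map ty [Suc p..<Suc m]) = ty"
    proof
      fix i
      show "psi m p (\<lambda>i. if p < i then LD else ty i, map ty [Suc p..<Suc m]) i = ty i"
      proof (cases "p < i \<and> i \<le> m")
        case True
        then have "i - Suc p < length [Suc p..<Suc m]" by (simp, arith)
        then show ?thesis using True by (simp add: psi_def)
      next
        case False
        then show ?thesis using ty unfolding psi_def TS_def TyS_def by auto
      qed
    qed
  qed
  show "psi m p ` (AS m p \<times> Ls q (\<mu> - 1)) \<subseteq> TS m \<mu> p"
  proof
    fix y assume "y \<in> psi m p ` (AS m p \<times> Ls q (\<mu> - 1))"
    then obtain a w where aw: "y = psi m p (a, w)" "a \<in> AS m p" "w \<in> Ls q (\<mu> - 1)" by auto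
    have lw: "length w = m - p" and lf: "length (filter (\<lambda>x. x = LD) w) = q"
      using aw pm unfolding Ls_def by auto
    have "card {j \<in> {p<..m}. y j = ST} = length (filter (\<lambda>x. x = ST) w)"
      using card_ST_map[of p m y] map_psi[OF lw pm(2), of a] aw by simp
    also have "\<dots> = \<mu> - 1" using filter_ST_LD[of w] lw lf pm by simp
    finally have c: "card {j \<in> {p<..m}. y j = ST} = \<mu> - 1" .
    have "y \<in> TyS m" using aw pm unfolding TyS_def AS_def psi_def by auto
    moreover have "y p = ST" using aw unfolding AS_def psi_def by auto
    ultimately show "y \<in> TS m \<mu> p" using c unfolding TS_def by auto
  qed
  show "(\<lambda>ty. (\<lambda>i. if p < i then LD else ty i, map ty [Suc p..<Suc m])) ` TS m \<mu> p
        \<subseteq> AS m p \<times> Ls q (\<mu> - 1)"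
  proof
    fix x assume "x \<in> (\<lambda>ty. (\<lambda>i. if p < i then LD else ty i, map ty [Suc p..<Suc m])) ` TS m \<mu> p"
    then obtain ty where ty: "ty \<in> TS m \<mu> p" "x = (\<lambda>i. if p < i then LD else ty i, map ty [Suc p..<Suc m])"
      by auto
    have "(\<lambda>i. if p < i then LD else ty i) \<in> AS m p" using ty pm unfolding AS_def TS_def TyS_def by auto
    moreover have "map ty [Suc p..<Suc m] \<in> Ls q (\<mu> - 1)"
    proof -
      let ?w = "map ty [Suc p..<Suc m]"
      have "length (filter (\<lambda>x. x = ST) ?w) = \<mu> - 1" using ty card_ST_map[of p m ty] unfolding TS_def by simp
      moreover have "length ?w = q + (\<mu> - 1)" using pm by simp
      moreover have "length (filter (\<lambda>x. x = LD) ?w) \<le> length ?w" by (rule length_filter_le)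
      ultimately show ?thesis unfolding Ls_def using filter_ST_LD[of ?w]
        by (simp del: length_filter_le length_map)
    qed
    ultimately show "x \<in> AS m p \<times> Ls q (\<mu> - 1)" using ty by simp
  qed
qed



lemma F_sub:
  assumes mu: "1 \<le> \<mu>" and mq: "\<mu> + q \<le> m" and pdef: "p = m + 1 - \<mu> - q"
    and ty: "ty \<in> TS m \<mu> p" and c: "\<forall>(r, j)\<in>Dset m p ty. c r j"
  shows "(ty, c) \<in> F_event TSO m \<mu>"
proof -
  have pm: "1 \<le> p" "p \<le> m" using mu mq pdef by auto
  have tyP: "ty p = ST" and cnt: "card {j \<in> {p<..m}. ty j = ST} = \<mu> - 1" using ty unfolding TS_def by auto
  have "{s \<in> {p..<Suc m}. ty s = ST} = insert p {j \<in> {p<..m}. ty j = ST}" using tyP pm by auto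
  then have K: "Kc p ty (Suc m) = \<mu>" unfolding Kc_def using cnt mu by simp
  have E: "\<forall>r j. p < r \<and> r \<le> m \<and> ty r = LD \<and> j < Kc p ty r \<longrightarrow> c r j"
    using c unfolding Dset_def by auto
  have inv: "\<forall>i. m - Kc p ty (Suc m) \<le> i \<and> i < m \<longrightarrow> itype m ty (settle TSO m ty c m ! i) = ST"
    by (rule settle_inv[OF pm(1) E]) simp
  have "\<forall>pos\<in>{m + 1 - \<mu>..m}. itype m ty (settle TSO m ty c m ! (pos - 1)) = ST"
  proof
    fix pos assume pos: "pos \<in> {m + 1 - \<mu>..m}"
    have "m - Kc p ty (Suc m) \<le> pos - 1" "pos - 1 < m" using K mq mu pos by auto
    then show "itype m ty (settle TSO m ty c m ! (pos - 1)) = ST" using inv by auto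
  qed
  then show ?thesis unfolding F_event_def by simp
qed

lemma sum_TS:
  assumes mu: "1 \<le> \<mu>" and mq: "\<mu> + q \<le> m" and pdef: "p = m + 1 - \<mu> - q"
  shows "(\<Sum>ty\<in>TS m \<mu> p. (1/2::real) ^ card (Dset m p ty)) = real (card (AS m p)) * G q (\<mu> - 1)"
    and "card (TS m \<mu> p) = card (AS m p) * card (Ls q (\<mu> - 1))"
proof -
  have pm: "1 \<le> p" "p \<le> m" "m - p = q + (\<mu> - 1)" using mu mq pdef by auto
  have bij: "bij_betw (psi m p) (AS m p \<times> Ls q (\<mu> - 1)) (TS m \<mu> p)" by (rule psi_bij[OF mu mq pdef])
  have "(\<Sum>ty\<in>TS m \<mu> p. (1/2::real) ^ card (Dset m p ty))
      = (\<Sum>x\<in>AS m p \<times> Ls q (\<mu> - 1). (1/2::real) ^ card (Dset m p (psi m p x)))"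
    by (rule sum.reindex_bij_betw[OF bij, symmetric])
  also have "\<dots> = (\<Sum>x\<in>AS m p \<times> Ls q (\<mu> - 1). (1/2::real) ^ cost 1 (snd x))"
  proof (rule sum.cong)
    fix x assume x: "x \<in> AS m p \<times> Ls q (\<mu> - 1)"
    then obtain a w where aw: "x = (a, w)" "w \<in> Ls q (\<mu> - 1)" by auto
    have lw: "length w = m - p" using aw pm unfolding Ls_def by simp
    have "psi m p x \<in> TS m \<mu> p" using bij x by (auto simp: bij_betw_def)
    then have "psi m p x p = ST" unfolding TS_def by auto
    then have "card (Dset m p (psi m p x)) = cost 1 (map (psi m p x) [Suc p..<Suc m])"
      using card_Dset pm by blast
    also have "\<dots> = cost 1 w" using map_psi[OF lw pm(2)] aw by simp
    finally show "(1/2::real) ^ card (Dset m p (psi m p x)) = (1/2) ^ cost 1 (snd x)" using aw by simp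
  qed simp
  also have "\<dots> = (\<Sum>a\<in>AS m p. \<Sum>w\<in>Ls q (\<mu> - 1). (1/2::real) ^ cost 1 w)"
    by (subst sum.cartesian_product) (simp add: case_prod_beta)
  also have "\<dots> = real (card (AS m p)) * G q (\<mu> - 1)" by (simp add: G_def)
  finally show "(\<Sum>ty\<in>TS m \<mu> p. (1/2::real) ^ card (Dset m p ty)) = real (card (AS m p)) * G q (\<mu> - 1)" .
  show "card (TS m \<mu> p) = card (AS m p) * card (Ls q (\<mu> - 1))"
    using bij_betw_same_card[OF bij] card_cartesian_product by metis
qed

lemma AS_pos: "1 \<le> p \<Longrightarrow> p \<le> m \<Longrightarrow> card (AS m p) > 0"
proof -
  assume pm: "1 \<le> p" "p \<le> m"
  have "AS m p \<subseteq> TyS m" unfolding AS_def by auto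
  then have "finite (AS m p)" using finite_TyS finite_subset by blast
  moreover have "(\<lambda>i. if i = p then ST else LD) \<in> AS m p" using pm unfolding AS_def TyS_def by auto
  ultimately show ?thesis by (metis card_gt_0_iff empty_iff)
qed

theorem claim2:
  fixes m \<mu> q :: nat
  assumes "1 \<le> m" and "1 \<le> \<mu>"
    and "measure_pmf.prob (program_pmf m) (cond_event m \<mu> q) > 0"
  shows "measure_pmf.prob (program_pmf m) (F_event TSO m \<mu> \<inter> cond_event m \<mu> q)
           / measure_pmf.prob (program_pmf m) (cond_event m \<mu> q)
         \<ge> (2 powr (1 - real q) - 2 powr (- real (\<mu> * q))) / real ((\<mu> + q - 1) choose q)"
proof -
  note mu = assms(2)
  define S where "S = sample_space m"
  have finS: "finite S" unfolding S_def sample_space_eq using finite_TyS card_CnS(2) by simp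
  have neS: "S \<noteq> {}"
  proof -
    have "((\<lambda>_. LD), (\<lambda>_ _. False)) \<in> S" unfolding S_def sample_space_def by simp
    then show ?thesis by auto
  qed
  have prob: "\<And>A. measure_pmf.prob (program_pmf m) A = card (S \<inter> A) / card S"
    unfolding program_pmf_def S_def[symmetric] by (rule measure_pmf_of_set[OF neS finS])
  have cardS: "card S > 0" using finS neS by (simp add: card_gt_0_iff)
  have "card (S \<inter> cond_event m \<mu> q) > 0" using assms(3) unfolding prob
    by (metis div_0 gr0I of_nat_0 order_less_irrefl)
  then obtain ty c where tc: "(ty, c) \<in> cond_event m \<mu> q" by (metis card.empty Int_iff less_irrefl subsetI subset_empty surj_pair)
  have mq: "\<mu> + q \<le> m" using cond_bound[OF tc] .
  define p where "p = m + 1 - \<mu> - q"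
  have pm: "1 \<le> p" "p \<le> m" using mu mq p_def by auto
  define L where "L = Ls q (\<mu> - 1)"
  define B where "B = card (BS m)"
  have C: "S \<inter> cond_event m \<mu> q = TS m \<mu> p \<times> CnS m" unfolding S_def p_def by (rule cond_eq[OF mu mq])
  have finTS: "finite (TS m \<mu> p)" using finite_TyS unfolding TS_def by simp
  define Sig where "Sig = Sigma (TS m \<mu> p) (\<lambda>ty. {c \<in> CnS m. \<forall>(r, j)\<in>Dset m p ty. c r j})"
  have Sig_sub: "Sig \<subseteq> S \<inter> (F_event TSO m \<mu> \<inter> cond_event m \<mu> q)"
  proof
    fix x assume "x \<in> Sig"
    then obtain ty c where x: "x = (ty, c)" "ty \<in> TS m \<mu> p" "c \<in> CnS m" "\<forall>(r, j)\<in>Dset m p ty. c r j"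
      unfolding Sig_def by auto
    have "(ty, c) \<in> F_event TSO m \<mu>" by (rule F_sub[OF mu mq p_def x(2) x(4)])
    moreover have "(ty, c) \<in> S \<inter> cond_event m \<mu> q" using C x by auto
    ultimately show "x \<in> S \<inter> (F_event TSO m \<mu> \<inter> cond_event m \<mu> q)" using x by auto
  qed
  have cardSig: "card Sig = (\<Sum>ty\<in>TS m \<mu> p. 2 ^ (B - card (Dset m p ty)))"
    unfolding Sig_def B_def using finTS card_CnS_D[OF Dset_sub] by simp
  have "real (card Sig) = (\<Sum>ty\<in>TS m \<mu> p. 2 ^ B * (1/2::real) ^ card (Dset m p ty))"
    unfolding cardSig of_nat_sum
  proof (rule sum.cong)
    fix ty assume "ty \<in> TS m \<mu> p"
    have le: "card (Dset m p ty) \<le> B" unfolding B_def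
      by (rule card_mono[OF _ Dset_sub]) (simp add: BS_def)
    show "real (2 ^ (B - card (Dset m p ty))) = 2 ^ B * (1/2::real) ^ card (Dset m p ty)"
    proof -
      have e: "(2::real) ^ B = 2 ^ (B - card (Dset m p ty)) * 2 ^ card (Dset m p ty)"
        using le by (simp add: power_add[symmetric])
      show ?thesis using e by (simp add: power_one_over field_simps)
    qed
  qed simp
  also have "\<dots> = 2 ^ B * (real (card (AS m p)) * G q (\<mu> - 1))"
    by (simp add: sum_distrib_left[symmetric] sum_TS(1)[OF mu mq p_def])
  finally have rSig: "real (card Sig) = 2 ^ B * (real (card (AS m p)) * G q (\<mu> - 1))" .
  have rC: "real (card (S \<inter> cond_event m \<mu> q)) = real (card (AS m p)) * real (card L) * 2 ^ B"
    unfolding C card_cartesian_product sum_TS(2)[OF mu mq p_def] card_CnS(1) B_def L_def by simp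
  have Fge: "card Sig \<le> card (S \<inter> (F_event TSO m \<mu> \<inter> cond_event m \<mu> q))"
    by (rule card_mono) (use finS Sig_sub in auto)
  have Lc: "card L = (\<mu> + q - 1) choose q" unfolding L_def card_Ls using mu by (simp add: add.commute)
  have Lpos: "card L > 0" using Lc mu by simp
  have Apos: "card (AS m p) > 0" by (rule AS_pos[OF pm])
  have "measure_pmf.prob (program_pmf m) (F_event TSO m \<mu> \<inter> cond_event m \<mu> q)
           / measure_pmf.prob (program_pmf m) (cond_event m \<mu> q)
        = card (S \<inter> (F_event TSO m \<mu> \<inter> cond_event m \<mu> q)) / card (S \<inter> cond_event m \<mu> q)"
    unfolding prob using cardS by (simp add: field_simps)
  also have "\<dots> \<ge> real (card Sig) / card (S \<inter> cond_event m \<mu> q)"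
    using Fge by (intro divide_right_mono) auto
  moreover have "real (card Sig) / card (S \<inter> cond_event m \<mu> q) = G q (\<mu> - 1) / card L"
    unfolding rSig rC using Apos Lpos by (simp add: field_simps)
  moreover have "G q (\<mu> - 1) / card L \<ge> (2 powr (1 - real q) - 2 powr (- real (\<mu> * q))) / real ((\<mu> + q - 1) choose q)"
  proof -
    have "G q (\<mu> - 1) \<ge> 2 powr (1 - real q) - 2 powr (- real ((\<mu> - 1 + 1) * q))" by (rule G_bound)
    then have "G q (\<mu> - 1) \<ge> 2 powr (1 - real q) - 2 powr (- real (\<mu> * q))" using mu by simp
    then show ?thesis unfolding Lc by (intro divide_right_mono) auto
  qed
  ultimately show ?thesis by linarith
qed

end
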